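(* Let $\mathcal G$ be a core network with input nodes $\iota_1,\dots,\iota_n$ and output node $o$, and let $\rho_k>\rho_{k+1}$ be two adjacent absolutely super-simple nodes. Then: (a) $\rho_k$ and $\rho_{k+1}$ are adjacent $\iota_m$-super-simple nodes, for every $m=1,\dots,n$; (b) for every $m=1,\dots,n$, every $\iota_m$-simple node in $\mathcal L_m(\rho_k,\rho_{k+1})$ is an absolutely simple node; (c) $\mathcal L_m(\rho_k,\rho_{k+1})=\mathcal L(\rho_k,\rho_{k+1})$ for every $m=1,\dots,n$.
   Context: Node $b$ is downstream from $a$ if there is a directed path from $a$ to $b$. A core network: every node is upstream from $o$ and downstream from at least one input node. A simple path visits each node at most once; an $\iota_mo$-simple path is a simple path from $\iota_m$ to $o$. A node is $\iota_m$-simple if it lies on an $\iota_mo$-simple path; absolutely simple if $\iota_m$-simple for every $m$. An $\iota_m$-super-simple node is an $\iota_m$-simple node lying on every $\iota_mo$-simple path; the $\iota_m$-super-simple nodes appear in the same order on every $\iota_mo$-simple path, and two of them are adjacent $\iota_m$-super-simple nodes if they are consecutive in this order. A node is absolutely super-simple if it lies on every $\iota_mo$-simple path for every $m$; these are totally ordered $\rho_1>\cdots>\rho_p>o$, where $a>b$ means $b$ comes after $a$ on every $\iota_mo$-simple path for every $m$, and $\rho_k,\rho_{k+1}$ are adjacent if consecutive in this order. For adjacent $\iota_m$-super-simple nodes $\rho_k>\rho_{k+1}$, an $\iota_m$-simple node $\rho$ is between them if some $\iota_mo$-simple path visits $\rho_k,\rho,\rho_{k+1}$ in that order; $\mathcal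 L_m(\rho_k,\rho_{k+1})$ is the subnetwork of $\iota_m$-simple nodes between $\rho_k$ and $\rho_{k+1}$, with the arrows of $\mathcal G_m$ (the subnetwork of nodes downstream from $\iota_m$ and upstream from $o$) connecting them. For adjacent absolutely super-simple nodes, an absolutely simple node $\rho$ is between them if for some $m$ some $\iota_mo$-simple path visits $\rho_k,\rho,\rho_{k+1}$ in that order; $\mathcal L(\rho_k,\rho_{k+1})$ is the subnetwork of absolutely simple nodes between them, with arrows of $\mathcal G$ connecting them. *)

theory Defs
  imports Main
begin

text \<open>An input-output network: a finite node set V, a set of arrows E \<subseteq> V \<times> V
  (multiplicities of arrows are irrelevant for path notions), input nodes
  inp 1, ..., inp n and an output node out.\<close>

definition downstream :: "('a \<times> 'a) set \<Rightarrow> 'a \<Rightarrow> 'a \<Rightarrow> bool" where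
  "downstream E a b \<longleftrightarrow> (a, b) \<in> E\<^sup>*"

definition core_network ::
  "'a set \<Rightarrow> ('a \<times> 'a) set \<Rightarrow> (nat \<Rightarrow> 'a) \<Rightarrow> nat \<Rightarrow> 'a \<Rightarrow> bool" where
  "core_network V E inp n out \<longleftrightarrow>
     finite V \<and> E \<subseteq> V \<times> V \<and> n \<ge> 1 \<and>
     inp ` {1..n} \<subseteq> V \<and> inj_on inp {1..n} \<and>
     out \<in> V \<and> out \<notin> inp ` {1..n} \<and>
     (\<forall>v\<in>V. downstream E v out \<and> (\<exists>m\<in>{1..n}. downstream E (inp m) v))"

definition is_path :: "('a \<times> 'a) set \<Rightarrow> 'a list \<Rightarrow> bool" where
  "is_path E p \<longleftrightarrow> p \<noteq> [] \<and> (\<forall>i. Suc i < length p \<longrightarrow> (p ! i, p ! Suc i) \<in> E)"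

definition simple_path :: "('a \<times> 'a) set \<Rightarrow> 'a \<Rightarrow> 'a \<Rightarrow> 'a list \<Rightarrow> bool" where
  "simple_path E a b p \<longleftrightarrow> is_path E p \<and> distinct p \<and> hd p = a \<and> last p = b"

definition in_simple :: "('a \<times> 'a) set \<Rightarrow> 'a \<Rightarrow> 'a \<Rightarrow> 'a \<Rightarrow> bool" where
  "in_simple E i out v \<longleftrightarrow> (\<exists>p. simple_path E i out p \<and> v \<in> set p)"

definition abs_simple :: "('a \<times> 'a) set \<Rightarrow> (nat \<Rightarrow> 'a) \<Rightarrow> nat \<Rightarrow> 'a \<Rightarrow> 'a \<Rightarrow> bool" where
  "abs_simple E inp n out v \<longleftrightarrow> (\<forall>m\<in>{1..n}. in_simple E (inp m) out v)"

definition in_super_simple :: "('a \<times> 'a) set \<Rightarrow> 'a \<Rightarrow> 'a \<Rightarrow> 'a \<Rightarrow> bool" where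
  "in_super_simple E i out v \<longleftrightarrow>
     in_simple E i out v \<and> (\<forall>p. simple_path E i out p \<longrightarrow> v \<in> set p)"

definition before_on :: "'a list \<Rightarrow> 'a \<Rightarrow> 'a \<Rightarrow> bool" where
  "before_on p a b \<longleftrightarrow> (\<exists>i j. i < j \<and> j < length p \<and> p ! i = a \<and> p ! j = b)"

definition in_greater :: "('a \<times> 'a) set \<Rightarrow> 'a \<Rightarrow> 'a \<Rightarrow> 'a \<Rightarrow> 'a \<Rightarrow> bool" where
  "in_greater E i out a b \<longleftrightarrow> (\<forall>p. simple_path E i out p \<longrightarrow> before_on p a b)"

definition adjacent_in_super_simple :: "('a \<times> 'a) set \<Rightarrow> 'a \<Rightarrow> 'a \<Rightarrow> 'a \<Rightarrow> 'a \<Rightarrow> bool" where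
  "adjacent_in_super_simple E i out a b \<longleftrightarrow>
     in_super_simple E i out a \<and> in_super_simple E i out b \<and> in_greater E i out a b \<and>
     \<not> (\<exists>c. in_super_simple E i out c \<and> in_greater E i out a c \<and> in_greater E i out c b)"

definition abs_super_simple :: "('a \<times> 'a) set \<Rightarrow> (nat \<Rightarrow> 'a) \<Rightarrow> nat \<Rightarrow> 'a \<Rightarrow> 'a \<Rightarrow> bool" where
  "abs_super_simple E inp n out v \<longleftrightarrow>
     (\<forall>m\<in>{1..n}. \<forall>p. simple_path E (inp m) out p \<longrightarrow> v \<in> set p)"

definition abs_greater :: "('a \<times> 'a) set \<Rightarrow> (nat \<Rightarrow> 'a) \<Rightarrow> nat \<Rightarrow> 'a \<Rightarrow> 'a \<Rightarrow> 'a \<Rightarrow> bool" where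
  "abs_greater E inp n out a b \<longleftrightarrow> (\<forall>m\<in>{1..n}. in_greater E (inp m) out a b)"

definition adjacent_abs_super_simple ::
  "('a \<times> 'a) set \<Rightarrow> (nat \<Rightarrow> 'a) \<Rightarrow> nat \<Rightarrow> 'a \<Rightarrow> 'a \<Rightarrow> 'a \<Rightarrow> bool" where
  "adjacent_abs_super_simple E inp n out a b \<longleftrightarrow>
     abs_super_simple E inp n out a \<and> abs_super_simple E inp n out b \<and>
     abs_greater E inp n out a b \<and>
     \<not> (\<exists>c. abs_super_simple E inp n out c \<and> abs_greater E inp n out a c \<and>
            abs_greater E inp n out c b)"

definition visits_in_order :: "'a list \<Rightarrow> 'a \<Rightarrow> 'a \<Rightarrow> 'a \<Rightarrow> bool" where
  "visits_in_order p a v c \<longleftrightarrow>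
     (\<exists>i j k. i \<le> j \<and> j \<le> k \<and> k < length p \<and> p ! i = a \<and> p ! j = v \<and> p ! k = c)"

definition G_in :: "'a set \<Rightarrow> ('a \<times> 'a) set \<Rightarrow> 'a \<Rightarrow> 'a \<Rightarrow> 'a set \<times> ('a \<times> 'a) set" where
  "G_in V E i out =
     (let N = {v\<in>V. downstream E i v \<and> downstream E v out} in (N, E \<inter> (N \<times> N)))"

definition L_in :: "'a set \<Rightarrow> ('a \<times> 'a) set \<Rightarrow> 'a \<Rightarrow> 'a \<Rightarrow> 'a \<Rightarrow> 'a \<Rightarrow> 'a set \<times> ('a \<times> 'a) set" where
  "L_in V E i out a b =
     (let N = {v. in_simple E i out v \<and>
                  (\<exists>p. simple_path E i out p \<and> visits_in_order p a v b)}
      in (N, snd (G_in V E i out) \<inter> (N \<times> N)))"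

definition L_abs :: "'a set \<Rightarrow> ('a \<times> 'a) set \<Rightarrow> (nat \<Rightarrow> 'a) \<Rightarrow> nat \<Rightarrow> 'a \<Rightarrow> 'a \<Rightarrow> 'a \<Rightarrow>
    'a set \<times> ('a \<times> 'a) set" where
  "L_abs V E inp n out a b =
     (let N = {v. abs_simple E inp n out v \<and>
                  (\<exists>m\<in>{1..n}. \<exists>p. simple_path E (inp m) out p \<and> visits_in_order p a v b)}
      in (N, E \<inter> (N \<times> N)))"

end

theory Submission
  imports Defs
begin


fun pth :: "('a \<times> 'a) set \<Rightarrow> 'a list \<Rightarrow> bool" where
  "pth E [] = False"
| "pth E [x] = True"
| "pth E (x # y # ys) = ((x, y) \<in> E \<and> pth E (y # ys))"

lemma is_path_pth: "is_path E p = pth E p"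
proof (induction E p rule: pth.induct)
  case (1 E) then show ?case by (simp add: is_path_def)
next
  case (2 E x) then show ?case by (simp add: is_path_def)
next
  case (3 E x y ys)
  have "is_path E (x # y # ys) = ((x, y) \<in> E \<and> is_path E (y # ys))"
    unfolding is_path_def
  proof (intro iffI conjI allI impI)
    assume h: "x # y # ys \<noteq> [] \<and> (\<forall>i. Suc i < length (x # y # ys) \<longrightarrow> ((x # y # ys) ! i, (x # y # ys) ! Suc i) \<in> E)"
    then show "(x, y) \<in> E" using h[THEN conjunct2, rule_format, of 0] by simp
    show "y # ys \<noteq> []" by simp
    fix i assume "Suc i < length (y # ys)"
    then show "((y # ys) ! i, (y # ys) ! Suc i) \<in> E" using h[THEN conjunct2, rule_format, of "Suc i"] by simp
  next
    assume h: "(x, y) \<in> E \<and> y # ys \<noteq> [] \<and> (\<forall>i. Suc i < length (y # ys) \<longrightarrow> ((y # ys) ! i, (y # ys) ! Suc i) \<in> E)"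
    show "x # y # ys \<noteq> []" by simp
    fix i assume "Suc i < length (x # y # ys)"
    then show "((x # y # ys) ! i, (x # y # ys) ! Suc i) \<in> E"
      using h by (cases i) auto
  qed
  then show ?case using 3 by simp
qed

lemma pth_append: "pth E (xs @ y # ys) = (pth E (xs @ [y]) \<and> pth E (y # ys))"
proof (induction xs)
  case Nil then show ?case by simp
next
  case (Cons x xs) then show ?case by (cases xs) auto
qed

lemma pth_rtrancl: "pth E p \<Longrightarrow> (hd p, last p) \<in> E\<^sup>*"
  by (induction E p rule: pth.induct) auto

lemma rtrancl_pth: "(a, b) \<in> E\<^sup>* \<Longrightarrow> \<exists>p. pth E p \<and> hd p = a \<and> last p = b"
proof (induction rule: rtrancl_induct)
  case base then show ?case by (intro exI[of _ "[a]"]) auto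
next
  case (step y z)
  then obtain p where p: "pth E p" "hd p = a" "last p = y" by blast
  then have ne: "p \<noteq> []" by (cases p) auto
  then have pe: "p = butlast p @ [y]" using p by (metis append_butlast_last_id)
  have "pth E (butlast p @ y # [z])"
    using pth_append[of E "butlast p" y "[z]"] p pe step by simp
  moreover have "hd (butlast p @ [y, z]) = hd (butlast p @ [y])" by (cases "butlast p") auto
  then have "hd (butlast p @ [y, z]) = a" using p pe by simp
  ultimately show ?case using pe by (intro exI[of _ "butlast p @ [y, z]"]) auto
qed

lemma pth_distinct: "pth E p \<Longrightarrow> \<exists>p'. pth E p' \<and> distinct p' \<and> hd p' = hd p \<and> last p' = last p"
proof (induction "length p" arbitrary: p rule: less_induct)
  case less
  show ?case
  proof (cases "distinct p")
    case True then show ?thesis using less by blast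
  next
    case False
    then obtain xs ys zs y where d: "p = xs @ [y] @ ys @ [y] @ zs" using not_distinct_decomp by blast
    have "pth E (xs @ y # zs)"
      using less(2) d pth_append[of E xs y "ys @ y # zs"] pth_append[of E "xs @ y # ys" y zs]
        pth_append[of E xs y zs] by simp
    moreover have "length (xs @ y # zs) < length p" using d by simp
    moreover have "hd (xs @ y # zs) = hd p" using d by (cases xs) auto
    moreover have "last (xs @ y # zs) = last p" using d by simp
    ultimately show ?thesis using less(1) by metis
  qed
qed

lemma rtrancl_simple: "(a, b) \<in> E\<^sup>* \<Longrightarrow> \<exists>p. simple_path E a b p"
  using rtrancl_pth pth_distinct unfolding simple_path_def is_path_pth by metis

lemma before_on_shift: "before_on ys x y \<Longrightarrow> before_on (xs @ ys) x y"
  unfolding before_on_def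
  by (metis add.commute add_less_cancel_left length_append nth_append_length_plus)

lemma before_on_unshift: "before_on (xs @ ys) x y \<Longrightarrow> x \<notin> set xs \<Longrightarrow> before_on ys x y"
  unfolding before_on_def
proof (elim exE conjE)
  fix i j assume h: "i < j" "j < length (xs @ ys)" "(xs @ ys) ! i = x" "(xs @ ys) ! j = y" "x \<notin> set xs"
  then have "i \<ge> length xs" by (metis nth_append nth_mem not_le)
  then show "\<exists>i j. i < j \<and> j < length ys \<and> ys ! i = x \<and> ys ! j = y"
    using h by (intro exI[of _ "i - length xs"] exI[of _ "j - length xs"]) (auto simp: nth_append)
qed

lemma before_on_set: "before_on p x y \<Longrightarrow> x \<in> set p \<and> y \<in> set p"
  unfolding before_on_def by auto

lemma before_on_neq: "before_on p x y \<Longrightarrow> distinct p \<Longrightarrow> x \<noteq> y"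
  unfolding before_on_def using nth_eq_iff_index_eq by fastforce

lemma before_on_mid: "c \<in> set ys \<Longrightarrow> before_on (xs @ a # ys) a c"
proof -
  assume "c \<in> set ys"
  then obtain k where k: "k < length ys" "ys ! k = c" by (auto simp: in_set_conv_nth)
  show ?thesis unfolding before_on_def
    using k by (intro exI[of _ "length xs"] exI[of _ "length xs + Suc k"]) (auto simp: nth_append)
qed

lemma before_on_head: "before_on (a # ys) a c \<Longrightarrow> distinct (a # ys) \<Longrightarrow> c \<in> set ys"
  using before_on_set before_on_neq by fastforce

lemma visits_shift: "visits_in_order ys x v y \<Longrightarrow> visits_in_order (xs @ ys) x v y"
  unfolding visits_in_order_def
proof (elim exE conjE)
  fix i j k assume h: "i \<le> j" "j \<le> k" "k < length ys" "ys ! i = x" "ys ! j = v" "ys ! k = y"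
  show "\<exists>i j k. i \<le> j \<and> j \<le> k \<and> k < length (xs @ ys) \<and> (xs @ ys) ! i = x \<and> (xs @ ys) ! j = v \<and> (xs @ ys) ! k = y"
    using h by (intro exI[of _ "length xs + i"] exI[of _ "length xs + j"] exI[of _ "length xs + k"]) (auto simp: nth_append)
qed

lemma visits_unshift: "visits_in_order (xs @ ys) x v y \<Longrightarrow> x \<notin> set xs \<Longrightarrow> visits_in_order ys x v y"
  unfolding visits_in_order_def
proof (elim exE conjE)
  fix i j k assume h: "i \<le> j" "j \<le> k" "k < length (xs @ ys)" "(xs @ ys) ! i = x" "(xs @ ys) ! j = v" "(xs @ ys) ! k = y" "x \<notin> set xs"
  then have "i \<ge> length xs" by (metis nth_append nth_mem not_le)
  then show "\<exists>i j k. i \<le> j \<and> j \<le> k \<and> k < length ys \<and> ys ! i = x \<and> ys ! j = v \<and> ys ! k = y"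
    using h by (intro exI[of _ "i - length xs"] exI[of _ "j - length xs"] exI[of _ "k - length xs"]) (auto simp: nth_append)
qed

lemma visits_set: "visits_in_order p x v y \<Longrightarrow> v \<in> set p"
  unfolding visits_in_order_def by auto

lemma splice:
  assumes q: "simple_path E i out q" and p: "simple_path E j out p"
    and qd: "q = q1 @ a # q2" and pd: "p = p1 @ a # p2"
    and A: "\<forall>r. simple_path E i out r \<longrightarrow> a \<in> set r"
  shows "simple_path E i out (q1 @ a # p2)"
proof -
  have disj: "set q1 \<inter> set p2 = {}"
  proof (rule ccontr)
    assume "set q1 \<inter> set p2 \<noteq> {}"
    then have "\<exists>x\<in>set q1. x \<in> set p2" by blast
    then obtain u x w where u: "q1 = u @ x # w" "x \<in> set p2" "\<forall>y\<in>set u. y \<notin> set p2"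
      using split_list_first_prop[of q1 "\<lambda>x. x \<in> set p2"] by blast
    then obtain s t where st: "p2 = s @ x # t" by (meson split_list)
    have pq: "pth E q" "distinct q" "hd q = i" "last q = out"
      using q unfolding simple_path_def is_path_pth by auto
    have pp: "pth E p" "distinct p" "hd p = j" "last p = out"
      using p unfolding simple_path_def is_path_pth by auto
    have "pth E (u @ [x])" using pq(1) qd u pth_append[of E u x "w @ a # q2"] by simp
    moreover have "pth E (x # t)" using pp(1) pd st pth_append[of E "p1 @ a # s" x t] by simp
    ultimately have pt: "pth E (u @ x # t)" using pth_append by metis
    have dt: "distinct (u @ x # t)"
      using pq(2) pp(2) qd pd u st by auto
    have "hd (u @ x # t) = i" using pq(3) qd u by (cases u) auto
    moreover have "last (u @ x # t) = out" using pp(4) pd st by simp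
    ultimately have "simple_path E i out (u @ x # t)"
      using pt dt unfolding simple_path_def is_path_pth by simp
    then have "a \<in> set (u @ x # t)" using A by blast
    then show False using pq(2) pp(2) qd pd u st by auto
  qed
  have pq: "pth E q" "distinct q" "hd q = i" "last q = out"
    using q unfolding simple_path_def is_path_pth by auto
  have pp: "pth E p" "distinct p" "hd p = j" "last p = out"
    using p unfolding simple_path_def is_path_pth by auto
  have "pth E (q1 @ [a])" using pq(1) qd pth_append[of E q1 a q2] by simp
  moreover have "pth E (a # p2)" using pp(1) pd pth_append[of E p1 a p2] by simp
  ultimately have "pth E (q1 @ a # p2)" using pth_append by metis
  moreover have "distinct (q1 @ a # p2)" using pq(2) pp(2) qd pd disj by auto
  moreover have "hd (q1 @ a # p2) = i" using pq(3) qd by (cases q1) auto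
  moreover have "last (q1 @ a # p2) = out" using pp(4) pd by simp
  ultimately show ?thesis unfolding simple_path_def is_path_pth by simp
qed

lemma path_nodes:
  assumes "simple_path E i out p" "v \<in> set p" "E \<subseteq> V \<times> V" "i \<in> V"
  shows "v \<in> V \<and> downstream E i v \<and> downstream E v out"
proof -
  have pp: "pth E p" "hd p = i" "last p = out" using assms(1) unfolding simple_path_def is_path_pth by auto
  obtain u w where d: "p = u @ v # w" using assms(2) by (meson split_list)
  have "pth E (u @ [v])" "pth E (v # w)" using pp(1) d pth_append by metis+
  have "hd (u @ [v]) = i" using pp(2) d by (cases u) auto
  then have r1: "(i, v) \<in> E\<^sup>*" using pth_rtrancl[OF \<open>pth E (u @ [v])\<close>] by simp
  have "last (v # w) = out" using pp(3) d by simp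
  then have r2: "(v, out) \<in> E\<^sup>*" using pth_rtrancl[OF \<open>pth E (v # w)\<close>] by simp
  have "v \<in> V" using r1 assms(3,4) by (induction rule: rtrancl_induct) auto
  then show ?thesis using r1 r2 unfolding downstream_def by simp
qed


theorem lemma3p21:
  fixes V :: "'a set" and E :: "('a \<times> 'a) set" and inp :: "nat \<Rightarrow> 'a"
    and n :: nat and out :: 'a and a b :: 'a
  assumes "core_network V E inp n out"
    and "adjacent_abs_super_simple E inp n out a b"
  shows "(\<forall>m\<in>{1..n}. adjacent_in_super_simple E (inp m) out a b)
    \<and> (\<forall>m\<in>{1..n}. \<forall>v\<in>fst (L_in V E (inp m) out a b).
          in_simple E (inp m) out v \<longrightarrow> abs_simple E inp n out v)
    \<and> (\<forall>m\<in>{1..n}. L_in V E (inp m) out a b = L_abs V E inp n out a b)"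
proof -
  have EV: "E \<subseteq> V \<times> V" and inV: "\<And>m. m \<in> {1..n} \<Longrightarrow> inp m \<in> V"
    using assms(1) unfolding core_network_def by auto
  have ex: "\<exists>q. simple_path E (inp m) out q" if "m \<in> {1..n}" for m
  proof -
    have "downstream E (inp m) out" using assms(1) inV[OF that] unfolding core_network_def by blast
    then show ?thesis using rtrancl_simple[of "inp m" out E] unfolding downstream_def by simp
  qed
  have Aa: "a \<in> set p" if "m \<in> {1..n}" "simple_path E (inp m) out p" for m p
    using assms(2) that unfolding adjacent_abs_super_simple_def abs_super_simple_def by blast
  have Ab: "b \<in> set p" if "m \<in> {1..n}" "simple_path E (inp m) out p" for m p
    using assms(2) that unfolding adjacent_abs_super_simple_def abs_super_simple_def by blast
  have Gab: "in_greater E (inp m) out a b" if "m \<in> {1..n}" for m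
    using assms(2) that unfolding adjacent_abs_super_simple_def abs_greater_def by blast
  have adj: "\<not> (\<exists>c. abs_super_simple E inp n out c \<and> abs_greater E inp n out a c \<and>
            abs_greater E inp n out c b)"
    using assms(2) unfolding adjacent_abs_super_simple_def by blast
  have spl: "\<exists>q1 p1 p2. p = p1 @ a # p2 \<and> simple_path E (inp m) out (q1 @ a # p2)"
    if m: "m \<in> {1..n}" and m': "m' \<in> {1..n}" and p: "simple_path E (inp m') out p" for m m' p
  proof -
    obtain q where q: "simple_path E (inp m) out q" using ex[OF m] by blast
    obtain q1 q2 where qd: "q = q1 @ a # q2" using Aa[OF m q] by (meson split_list)
    obtain p1 p2 where pd: "p = p1 @ a # p2" using Aa[OF m' p] by (meson split_list)
    have "simple_path E (inp m) out (q1 @ a # p2)"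
      using splice[OF q p qd pd] Aa[OF m] by blast
    then show ?thesis using pd by blast
  qed
  have K: "\<exists>r. simple_path E (inp m') out r \<and> visits_in_order r a v b \<and> v \<in> set r"
    if m: "m \<in> {1..n}" and m': "m' \<in> {1..n}" and p: "simple_path E (inp m) out p"
      and vp: "visits_in_order p a v b" for m m' p v
  proof -
    obtain q1 p1 p2 where pd: "p = p1 @ a # p2" and r: "simple_path E (inp m') out (q1 @ a # p2)"
      using spl[OF m' m p] by blast
    have "distinct p" using p unfolding simple_path_def by simp
    then have "a \<notin> set p1" using pd by simp
    then have "visits_in_order (a # p2) a v b" using visits_unshift vp pd by metis
    then have "visits_in_order (q1 @ a # p2) a v b" using visits_shift by metis
    then show ?thesis using r visits_set by metis
  qed
  have PA: "adjacent_in_super_simple E (inp m) out a b" if m: "m \<in> {1..n}" for m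
  proof -
    obtain q where q: "simple_path E (inp m) out q" using ex[OF m] by blast
    have s1: "in_super_simple E (inp m) out a"
      unfolding in_super_simple_def in_simple_def using q Aa[OF m] by blast
    have s2: "in_super_simple E (inp m) out b"
      unfolding in_super_simple_def in_simple_def using q Ab[OF m] by blast
    have s3: "\<not> (\<exists>c. in_super_simple E (inp m) out c \<and> in_greater E (inp m) out a c \<and> in_greater E (inp m) out c b)"
    proof
      assume "\<exists>c. in_super_simple E (inp m) out c \<and> in_greater E (inp m) out a c \<and> in_greater E (inp m) out c b"
      then obtain c where c1: "in_greater E (inp m) out a c" and c2: "in_greater E (inp m) out c b" by blast
      have C: "c \<in> set p \<and> before_on p a c \<and> before_on p c b"
        if m': "m' \<in> {1..n}" and p: "simple_path E (inp m') out p" for m' p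
      proof -
        obtain q1 p1 p2 where pd: "p = p1 @ a # p2" and r: "simple_path E (inp m) out (q1 @ a # p2)"
          using spl[OF m m' p] by blast
        have dr: "distinct (q1 @ a # p2)" using r unfolding simple_path_def by simp
        have b1: "before_on (q1 @ a # p2) a c" using c1 r unfolding in_greater_def by blast
        have b2: "before_on (q1 @ a # p2) c b" using c2 r unfolding in_greater_def by blast
        have "a \<notin> set q1" using dr by simp
        then have "before_on (a # p2) a c" using before_on_unshift b1 by metis
        then have cp2: "c \<in> set p2" using before_on_head dr by fastforce
        then have "c \<notin> set q1" using dr by auto
        then have "before_on (a # p2) c b" using before_on_unshift b2 by metis
        then have "before_on p c b" using pd before_on_shift by metis
        moreover have "before_on p a c" using pd cp2 before_on_mid by metis
        ultimately show ?thesis using pd cp2 by simp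
      qed
      have "abs_super_simple E inp n out c \<and> abs_greater E inp n out a c \<and> abs_greater E inp n out c b"
        unfolding abs_super_simple_def abs_greater_def in_greater_def using C by blast
      then show False using adj by blast
    qed
    show ?thesis unfolding adjacent_in_super_simple_def using s1 s2 s3 Gab[OF m] by blast
  qed
  have PB: "abs_simple E inp n out v"
    if m: "m \<in> {1..n}" and p: "simple_path E (inp m) out p" and vp: "visits_in_order p a v b" for m p v
    unfolding abs_simple_def in_simple_def using K[OF m _ p vp] by blast
  have PC: "L_in V E (inp m) out a b = L_abs V E inp n out a b" if m: "m \<in> {1..n}" for m
  proof -
    define N1 where "N1 = {v. in_simple E (inp m) out v \<and>
                  (\<exists>p. simple_path E (inp m) out p \<and> visits_in_order p a v b)}"
    define N2 where "N2 = {v. abs_simple E inp n out v \<and>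
                  (\<exists>m\<in>{1..n}. \<exists>p. simple_path E (inp m) out p \<and> visits_in_order p a v b)}"
    define GN where "GN = {v\<in>V. downstream E (inp m) v \<and> downstream E v out}"
    have "N1 \<subseteq> N2" unfolding N1_def N2_def using PB m by blast
    moreover have "N2 \<subseteq> N1"
    proof
      fix v assume "v \<in> N2"
      then obtain m' p where m': "m' \<in> {1..n}" and p: "simple_path E (inp m') out p"
        and vp: "visits_in_order p a v b" and as: "abs_simple E inp n out v"
        unfolding N2_def by blast
      have "in_simple E (inp m) out v" using as m unfolding abs_simple_def by blast
      then show "v \<in> N1" unfolding N1_def using K[OF m' m p vp] by blast
    qed
    ultimately have eq: "N1 = N2" by blast
    have sub: "N1 \<subseteq> GN"
    proof
      fix v assume "v \<in> N1"
      then obtain p where "simple_path E (inp m) out p" "v \<in> set p"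
        unfolding N1_def in_simple_def by blast
      then show "v \<in> GN" unfolding GN_def using path_nodes[OF _ _ EV inV[OF m]] by blast
    qed
    have "L_in V E (inp m) out a b = (N1, E \<inter> (GN \<times> GN) \<inter> (N1 \<times> N1))"
      unfolding L_in_def G_in_def N1_def GN_def Let_def by simp
    also have "\<dots> = (N2, E \<inter> (N2 \<times> N2))"
    proof -
      have "E \<inter> (GN \<times> GN) \<inter> (N1 \<times> N1) = E \<inter> (N1 \<times> N1)" using sub by blast
      then show ?thesis using eq by simp
    qed
    also have "\<dots> = L_abs V E inp n out a b" unfolding L_abs_def N2_def Let_def by simp
    finally show ?thesis .
  qed
  have PB': "\<forall>m\<in>{1..n}. \<forall>v\<in>fst (L_in V E (inp m) out a b).
          in_simple E (inp m) out v \<longrightarrow> abs_simple E inp n out v"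
  proof (intro ballI impI)
    fix m v assume m: "m \<in> {1..n}" and v: "v \<in> fst (L_in V E (inp m) out a b)"
    have "fst (L_in V E (inp m) out a b) = {v. in_simple E (inp m) out v \<and>
                  (\<exists>p. simple_path E (inp m) out p \<and> visits_in_order p a v b)}"
      unfolding L_in_def Let_def by simp
    then obtain p where "simple_path E (inp m) out p" "visits_in_order p a v b" using v by blast
    then show "abs_simple E inp n out v" using PB[OF m] by blast
  qed
  show ?thesis using PA PB' PC by (intro conjI ballI) simp_all
qed

end
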